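(* Let $(k_n)_{n\ge1}$ be positive with $\sum_{j\ge1}k_j\le1$, let $a=-\sum_{j\ge1}k_j$, $\lambda_n=\sum_{j\ge n}k_j$ for $n\ge1$ and $\lambda_0:=1$, and suppose $\lambda_n^2\le\lambda_{n-1}\lambda_{n+1}$ for all $n\ge1$. Let $r$ be the discrete resolvent. Then $\Delta_n:=r_{n-1}-r_n$ ($n\ge1$) satisfies $\Delta_n=\lambda_n-\sum_{j=1}^{n-1}\lambda_{n-j}\Delta_j$, $\Delta_n\ge0$ for all $n\ge1$, so $(r_n)_{n\ge0}$ is non-increasing.
   Context: The discrete resolvent $r=(r_n)_{n\ge0}$ is the unique solution of $r_{n+1}-r_n=ar_n+\sum_{j=1}^nk_jr_{n-j}$ for $n\ge0$, $r_0=1$. *)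

theory Defs
  imports Complex_Main
begin

definition is_discrete_resolvent :: "real \<Rightarrow> (nat \<Rightarrow> real) \<Rightarrow> (nat \<Rightarrow> real) \<Rightarrow> bool" where
  "is_discrete_resolvent a k r \<longleftrightarrow>
     r 0 = 1 \<and> (\<forall>n. r (Suc n) - r n = a * r n + (\<Sum>j=1..n. k j * r (n - j)))"

definition lam :: "(nat \<Rightarrow> real) \<Rightarrow> nat \<Rightarrow> real" where
  "lam k n = (if n = 0 then 1 else (\<Sum>j. k (j + n)))"

end

theory Submission
  imports Defs
begin

theorem mainTheorem10:
  fixes k r :: "nat \<Rightarrow> real" and a :: real
  assumes kpos: "\<And>n. n \<ge> 1 \<Longrightarrow> k n > 0"
    and ksum: "summable (\<lambda>j. k (j + 1))"
    and ksum_le: "(\<Sum>j. k (j + 1)) \<le> 1"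
    and a_def: "a = - (\<Sum>j. k (j + 1))"
    and logconv: "\<And>n. n \<ge> 1 \<Longrightarrow> (lam k n)\<^sup>2 \<le> lam k (n - 1) * lam k (n + 1)"
    and res: "is_discrete_resolvent a k r"
  shows "(\<forall>n\<ge>1. r (n - 1) - r n = lam k n - (\<Sum>j=1..n-1. lam k (n - j) * (r (j - 1) - r j)))
         \<and> (\<forall>n\<ge>1. r (n - 1) - r n \<ge> 0)
         \<and> decseq r"
proof -
  define L where "L = lam k"
  have sk: "summable (\<lambda>j. k (j + m))" for m
  proof -
    have "summable k" using ksum summable_iff_shift[of k 1] by simp
    then show ?thesis using summable_iff_shift[of k m] by simp
  qed
  have L0: "L 0 = 1" by (simp add: L_def lam_def)
  have Lpos: "L n > 0" for n
  proof (cases "n = 0")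
    case True then show ?thesis by (simp add: L0)
  next
    case False
    have "0 < (\<Sum>j. k (j + n))" by (rule suminf_pos[OF sk]) (use kpos False in simp)
    then show ?thesis using False by (simp add: L_def lam_def)
  qed
  have LSuc: "L m = k m + L (Suc m)" if "m \<ge> 1" for m
  proof -
    have "(\<Sum>j. k (Suc j + m)) = (\<Sum>j. k (j + m)) - k (0 + m)"
      using suminf_split_head[OF sk[of m]] by simp
    then show ?thesis using that by (simp add: L_def lam_def)
  qed
  have a1: "a = - L 1" by (simp add: a_def L_def lam_def)
  have r0: "r 0 = 1" and rec: "\<And>n. r (Suc n) - r n = a * r n + (\<Sum>j=1..n. k j * r (n - j))"
    using res by (auto simp: is_discrete_resolvent_def)
  have rec2: "r (Suc n) = (\<Sum>i=0..n. (L i - L (Suc i)) * r (n - i))" for n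
  proof -
    have "(\<Sum>i=0..n. (L i - L (Suc i)) * r (n - i))
        = (L 0 - L 1) * r n + (\<Sum>i=1..n. (L i - L (Suc i)) * r (n - i))"
      by (simp add: sum.atLeast_Suc_atMost)
    also have "(\<Sum>i=1..n. (L i - L (Suc i)) * r (n - i)) = (\<Sum>j=1..n. k j * r (n - j))"
      proof (rule sum.cong)
      fix i assume "i \<in> {1..n}"
      then have "L i - L (Suc i) = k i" using LSuc[of i] by simp
      then show "(L i - L (Suc i)) * r (n - i) = k i * r (n - i)" by simp
    qed simp
    finally show ?thesis using rec[of n] a1 L0 by (simp add: algebra_simps)
  qed
  have U: "(\<Sum>i=0..n. L i * r (n - i)) = 1" for n
  proof (induction n)
    case 0 then show ?case by (simp add: L0 r0)
  next
    case (Suc n)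
    have "(\<Sum>i=0..Suc n. L i * r (Suc n - i)) = L 0 * r (Suc n) + (\<Sum>i=0..n. L (Suc i) * r (n - i))"
      by (subst sum.atLeast0_atMost_Suc_shift) simp
    also have "r (Suc n) = (\<Sum>i=0..n. L i * r (n - i)) - (\<Sum>i=0..n. L (Suc i) * r (n - i))"
      by (simp add: rec2 sum_subtractf left_diff_distrib)
    finally show ?case using Suc L0 by simp
  qed
  have S: "(\<Sum>j=1..Suc m. L (Suc m - j) * (r (j - 1) - r j)) = L (Suc m)" for m
  proof -
    have "(\<Sum>j=1..Suc m. L (Suc m - j) * (r (j - 1) - r j)) = (\<Sum>i=0..m. L (m - i) * (r i - r (Suc i)))"
      unfolding One_nat_def sum.atLeast_Suc_atMost_Suc_shift by simp
    also have "\<dots> = (\<Sum>i=0..m. L (m - i) * r i) - (\<Sum>i=0..m. L (m - i) * r (Suc i))"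
      by (simp add: sum_subtractf right_diff_distrib)
    also have "(\<Sum>i=0..m. L (m - i) * r i) = (\<Sum>i=0..m. L i * r (m - i))"
      using sum.atLeastAtMost_rev[of "\<lambda>i. L (m - i) * r i" 0 m] by simp
    also have "(\<Sum>i=0..m. L (m - i) * r (Suc i)) = (\<Sum>i=0..m. L i * r (Suc m - i))"
      using sum.atLeastAtMost_rev[of "\<lambda>i. L (m - i) * r (Suc i)" 0 m]
      by (simp add: Suc_diff_le)
    also have "\<dots> = 1 - L (Suc m)"
      using U[of "Suc m"] r0 by (simp add: sum.atLeast0_atMost_Suc)
    finally show ?thesis using U[of m] by simp
  qed
  define D where "D j = r (j - 1) - r j" for j
  have part1: "\<forall>n\<ge>1. r (n - 1) - r n = lam k n - (\<Sum>j=1..n-1. lam k (n - j) * (r (j - 1) - r j))"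
  proof (intro allI impI)
    fix n :: nat assume "n \<ge> 1"
    then obtain m where n: "n = Suc m" by (cases n) auto
    have "(\<Sum>j=1..Suc m. L (Suc m - j) * (r (j - 1) - r j))
        = (\<Sum>j=1..m. L (Suc m - j) * (r (j - 1) - r j)) + L 0 * (r m - r (Suc m))"
      by (simp add: sum.cl_ivl_Suc)
    then show "r (n - 1) - r n = lam k n - (\<Sum>j=1..n-1. lam k (n - j) * (r (j - 1) - r j))"
      using S[of m] L0 n by (simp add: L_def)
  qed
  have ratio: "L (Suc p) * L q \<le> L p * L (Suc q)" if "p \<le> q" for p q
    using that
  proof (induction q rule: dec_induct)
    case base then show ?case by (simp add: mult.commute)
  next
    case (step q)
    have lc: "L (Suc q) * L (Suc q) \<le> L q * L (Suc (Suc q))"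
      using logconv[of "Suc q"] by (simp add: L_def power2_eq_square)
    have "L (Suc p) * L (Suc q) * L q = (L (Suc p) * L q) * L (Suc q)" by simp
    also have "\<dots> \<le> (L p * L (Suc q)) * L (Suc q)"
      using step.IH Lpos[of "Suc q"] by (simp add: mult_right_mono)
    also have "\<dots> = L p * (L (Suc q) * L (Suc q))" by simp
    also have "\<dots> \<le> L p * (L q * L (Suc (Suc q)))"
      using lc Lpos[of p] by (simp add: mult_left_mono)
    also have "\<dots> = (L p * L (Suc (Suc q))) * L q" by simp
    finally show ?case using Lpos[of q] by simp
  qed
  have Dnn: "D n \<ge> 0" if "n \<ge> 1" for n
    using that
  proof (induction n rule: nat_less_induct)
    case (1 n)
    then obtain m where n: "n = Suc m" by (cases n) auto
    show ?case
    proof (cases "m = 0")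
      case True
      then show ?thesis using S[of 0] Lpos[of 1] n by (simp add: D_def L0)
    next
      case False
      have Sm: "(\<Sum>j=1..m. L (m - j) * D j) = L m"
        using S[of "m - 1"] False by (simp add: D_def)
      have Sn: "D (Suc m) + (\<Sum>j=1..m. L (Suc m - j) * D j) = L (Suc m)"
        using S[of m] L0 by (simp add: D_def sum.cl_ivl_Suc)
      have key: "L m * D (Suc m) = (\<Sum>j=1..m. (L (Suc m) * L (m - j) - L m * L (Suc m - j)) * D j)"
      proof -
        have "L m * D (Suc m) = L m * L (Suc m) - L m * (\<Sum>j=1..m. L (Suc m - j) * D j)"
          using Sn by (simp add: right_diff_distrib[symmetric] eq_diff_eq)
        also have "\<dots> = L (Suc m) * (\<Sum>j=1..m. L (m - j) * D j) - L m * (\<Sum>j=1..m. L (Suc m - j) * D j)"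
          using Sm by simp
        also have "\<dots> = (\<Sum>j=1..m. (L (Suc m) * L (m - j) - L m * L (Suc m - j)) * D j)"
          by (simp only: sum_distrib_left sum_subtractf[symmetric] left_diff_distrib mult.assoc)
        finally show ?thesis .
      qed
      have "(\<Sum>j=1..m. (L (Suc m) * L (m - j) - L m * L (Suc m - j)) * D j) \<ge> 0"
      proof (rule sum_nonneg)
        fix j assume j: "j \<in> {1..m}"
        have "L (Suc (m - j)) * L m \<le> L (m - j) * L (Suc m)" by (rule ratio) simp
        moreover have "Suc m - j = Suc (m - j)" using j by auto
        ultimately have "L (Suc m) * L (m - j) - L m * L (Suc m - j) \<ge> 0"
          by (simp add: mult.commute)
        moreover have "D j \<ge> 0" using 1 j n by auto
        ultimately show "(L (Suc m) * L (m - j) - L m * L (Suc m - j)) * D j \<ge> 0" by simp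
      qed
      then have "L m * D (Suc m) \<ge> 0" using key by simp
      then show ?thesis using Lpos[of m] n by (simp add: zero_le_mult_iff)
    qed
  qed
  have part2: "\<forall>n\<ge>1. r (n - 1) - r n \<ge> 0" using Dnn by (simp add: D_def)
  have "decseq r"
    unfolding decseq_Suc_iff proof (intro allI)
    fix n show "r (Suc n) \<le> r n" using part2[rule_format, of "Suc n"] by simp
  qed
  then show ?thesis using part1 part2 by blast
qed

end
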